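(* Let $\omega\in\Omega_+$, $-\infty\le x\le y_1\le y_2\le z\le\infty$ with $y_1,y_2\in\mathbb Z$, and $t\in[0,\infty]$. Then \[P_{y_1,\omega}[T_z\le T_x\wedge t]\le P_{y_2,\omega}[T_z\le T_x\wedge t].\]
   Context: Cookie environments: $\Omega_+=([1/2,1]^{\mathbb N})^{\mathbb Z}$. $P_{x,\omega}$ is the law of the nearest-neighbor process $(X_n)_{n\ge0}$ with $X_0=x$ which, on its $i$-th visit to site $z$, jumps to $z+1$ with probability $\omega(z,i)$ and to $z-1$ otherwise. $T_k=\inf\{n\ge0:X_n=k\}$ for $k\in\mathbb Z$, and $T_\infty=T_{-\infty}=\infty$. *)

theory Defs
  imports "HOL-Probability.Probability"
begin

text \<open>Cookie environments: omega z i is the probability to jump right on the i-th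
  visit (i = 1, 2, ...) to site z. The value at i = 0 is irrelevant.\<close>
definition Omega_plus :: "(int \<Rightarrow> nat \<Rightarrow> real) set" where
  "Omega_plus = {\<omega>. \<forall>z i. i \<ge> 1 \<longrightarrow> 1/2 \<le> \<omega> z i \<and> \<omega> z i \<le> 1}"

definition cookie_space :: "(nat \<Rightarrow> real) measure" where
  "cookie_space = PiM UNIV (\<lambda>_::nat. uniform_measure lborel {0..1::real})"

text \<open>History X_0, ..., X_n of the walk started at x driven by u: at time n the walk
  is at p, which it visits for the i-th time (i = number of occurrences of p in the
  history so far); it jumps to p+1 iff u n < omega p i.\<close>
fun cookie_hist :: "int \<Rightarrow> (int \<Rightarrow> nat \<Rightarrow> real) \<Rightarrow> (nat \<Rightarrow> real) \<Rightarrow> nat \<Rightarrow> int list" where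
  "cookie_hist x \<omega> u 0 = [x]"
| "cookie_hist x \<omega> u (Suc n) =
     (let xs = cookie_hist x \<omega> u n; p = last xs; i = count_list xs p
      in xs @ [if u n < \<omega> p i then p + 1 else p - 1])"

definition cookie_walk :: "int \<Rightarrow> (int \<Rightarrow> nat \<Rightarrow> real) \<Rightarrow> (nat \<Rightarrow> real) \<Rightarrow> nat \<Rightarrow> int" where
  "cookie_walk x \<omega> u n = last (cookie_hist x \<omega> u n)"

definition cookie_prob :: "int \<Rightarrow> (int \<Rightarrow> nat \<Rightarrow> real) \<Rightarrow> ((nat \<Rightarrow> int) \<Rightarrow> bool) \<Rightarrow> real" where
  "cookie_prob x \<omega> A = measure cookie_space {u \<in> space cookie_space. A (cookie_walk x \<omega> u)}"

text \<open>Hitting time T_k = inf{n. X_n = k} (infinity if never, in particular for k = +-infinity).\<close>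
definition hit :: "(nat \<Rightarrow> int) \<Rightarrow> ereal \<Rightarrow> ereal" where
  "hit X k = (if \<exists>n. ereal (of_int (X n)) = k
              then ereal (real (LEAST n. ereal (of_int (X n)) = k)) else \<infinity>)"

end

theory Submission
  imports Defs
begin


type_synonym env = "int \<Rightarrow> nat \<Rightarrow> real"

definition pop :: "int \<Rightarrow> env \<Rightarrow> env" where
  "pop p \<omega> = (\<lambda>z i. if z = p then \<omega> z (Suc i) else \<omega> z i)"

definition okenv :: "env \<Rightarrow> bool" where
  "okenv \<omega> = (\<forall>z i. i \<ge> 1 \<longrightarrow> 0 \<le> \<omega> z i \<and> \<omega> z i \<le> 1)"

lemma okenv_pop: "okenv \<omega> \<Longrightarrow> okenv (pop p \<omega>)"
  by (auto simp: okenv_def pop_def)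

lemma okenv_D: "okenv \<omega> \<Longrightarrow> 0 \<le> \<omega> z 1 \<and> \<omega> z 1 \<le> 1"
  by (auto simp: okenv_def)

lemma pop_comm: "pop p (pop q \<omega>) = pop q (pop p \<omega>)"
  by (auto simp: pop_def fun_eq_iff)

lemma pop_other: "p \<noteq> q \<Longrightarrow> pop p \<omega> q i = \<omega> q i"
  by (auto simp: pop_def)

fun fr :: "ereal \<Rightarrow> ereal \<Rightarrow> int \<Rightarrow> env \<Rightarrow> nat \<Rightarrow> real" where
  "fr a b p \<omega> 0 = (if ereal (real_of_int p) = a then 1 else 0)"
| "fr a b p \<omega> (Suc n) = (if ereal (real_of_int p) = a then 1
     else if ereal (real_of_int p) = b then 0
     else \<omega> p 1 * fr a b (p+1) (pop p \<omega>) n + (1 - \<omega> p 1) * fr a b (p-1) (pop p \<omega>) n)"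

fun Lw :: "ereal \<Rightarrow> int \<Rightarrow> int \<Rightarrow> env \<Rightarrow> nat \<Rightarrow> (env \<Rightarrow> nat \<Rightarrow> real) \<Rightarrow> real" where
  "Lw b y p \<omega> 0 K = (if p = y+1 then K \<omega> 0 else 0)"
| "Lw b y p \<omega> (Suc n) K = (if p = y+1 then K \<omega> (Suc n)
     else if ereal (real_of_int p) = b then 0
     else \<omega> p 1 * Lw b y (p+1) (pop p \<omega>) n K + (1 - \<omega> p 1) * Lw b y (p-1) (pop p \<omega>) n K)"

fun Uw :: "ereal \<Rightarrow> int \<Rightarrow> int \<Rightarrow> env \<Rightarrow> nat \<Rightarrow> (env \<Rightarrow> nat \<Rightarrow> real) \<Rightarrow> (env \<Rightarrow> nat \<Rightarrow> real) \<Rightarrow> real" where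
  "Uw a y q \<omega> 0 K J = (if q = y then K \<omega> 0 else if ereal (real_of_int q) = a then J \<omega> 0 else 0)"
| "Uw a y q \<omega> (Suc n) K J = (if q = y then K \<omega> (Suc n)
     else if ereal (real_of_int q) = a then J \<omega> (Suc n)
     else \<omega> q 1 * Uw a y (q+1) (pop q \<omega>) n K J + (1 - \<omega> q 1) * Uw a y (q-1) (pop q \<omega>) n K J)"

lemma fr_Lw:
  assumes "ereal (real_of_int (y+1)) \<le> a"
  shows "p \<le> y+1 \<Longrightarrow> fr a b p \<omega> n = Lw b y p \<omega> n (\<lambda>\<omega>' m. fr a b (y+1) \<omega>' m)"
proof (induction n arbitrary: p \<omega>)
  case 0
  then show ?case using assms by auto
next
  case (Suc n)
  show ?case
  proof (cases "p = y+1")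
    case False
    with Suc.prems have "p \<le> y" by simp
    then have "ereal (real_of_int p) \<noteq> a" using assms by auto
    then show ?thesis using Suc False \<open>p \<le> y\<close> by simp
  qed simp
qed

lemma fr_Uw:
  assumes "b \<le> ereal (real_of_int y)"
  shows "y \<le> q \<Longrightarrow> fr a b q \<omega> n = Uw a y q \<omega> n (\<lambda>\<omega>' m. fr a b y \<omega>' m) (\<lambda>_ _. 1)"
proof (induction n arbitrary: q \<omega>)
  case 0
  then show ?case using assms by auto
next
  case (Suc n)
  show ?case
  proof (cases "q = y")
    case False
    with Suc.prems have "y+1 \<le> q" by simp
    then have "ereal (real_of_int q) \<noteq> b" using assms by auto
    then show ?thesis using Suc False \<open>y+1 \<le> q\<close> by simp
  qed simp
qed

lemma Lw_done[simp]: "Lw b y (y+1) \<omega> n K = K \<omega> n"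
  by (cases n) auto

lemma Uw_done[simp]: "Uw a y y \<omega> n K J = K \<omega> n"
  by (cases n) auto

lemma Uw_top: "q \<noteq> y \<Longrightarrow> ereal (real_of_int q) = a \<Longrightarrow> Uw a y q \<omega> n K J = J \<omega> n"
  by (cases n) auto

lemma Lw_bot: "p \<noteq> y+1 \<Longrightarrow> ereal (real_of_int p) = b \<Longrightarrow> Lw b y p \<omega> n K = 0"
  by (cases n) auto

lemma Uw_zero: "Uw a y q \<omega> n (\<lambda>_ _. 0) (\<lambda>_ _. 0) = 0"
  by (induction n arbitrary: q \<omega>) auto

lemma Lw_Uw_comm:
  assumes "b \<le> ereal (real_of_int y)"
  shows "p \<le> y+1 \<Longrightarrow> y \<le> q \<Longrightarrow>
    Lw b y p \<omega> n (\<lambda>\<omega>' m. Uw a y q \<omega>' m K J)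
    = Uw a y q \<omega> n (\<lambda>\<omega>' m. Lw b y p \<omega>' m K) (\<lambda>\<omega>' m. Lw b y p \<omega>' m J)"
proof (induction n arbitrary: p q \<omega> rule: less_induct)
  case (less n)
  show ?case
  proof (cases "p = y+1")
    case True
    then show ?thesis by simp
  next
    case pF: False
    show ?thesis
    proof (cases "q = y")
      case True
      then show ?thesis by simp
    next
      case qF: False
      have py: "p \<le> y" using pF less.prems by simp
      have qy: "y+1 \<le> q" using qF less.prems by simp
      show ?thesis
      proof (cases n)
        case 0
        then show ?thesis using pF qF by auto
      next
        case (Suc m)
        show ?thesis
        proof (cases "ereal (real_of_int q) = a")
          case True
          have "Lw b y p \<omega> n (\<lambda>\<omega>' m. Uw a y q \<omega>' m K J) = Lw b y p \<omega> n J"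
            using Uw_top[OF qF True] by simp
          then show ?thesis using Uw_top[OF qF True] by simp
        next
          case qa: False
          show ?thesis
          proof (cases "ereal (real_of_int p) = b")
            case True
            have "Lw b y p \<omega> n (\<lambda>\<omega>' m. Uw a y q \<omega>' m K J) = 0"
              using Lw_bot[OF pF True] by simp
            moreover have "Uw a y q \<omega> n (\<lambda>\<omega>' m. Lw b y p \<omega>' m K) (\<lambda>\<omega>' m. Lw b y p \<omega>' m J) = 0"
              using Lw_bot[OF pF True] Uw_zero by simp
            ultimately show ?thesis by simp
          next
            case pb: False
            define \<alpha> where "\<alpha> = \<omega> p 1"
            define \<beta> where "\<beta> = \<omega> q 1"
            have pq: "p \<noteq> q" using py qy by simp
            let ?U = "\<lambda>q' \<omega>' m. Uw a y q' \<omega>' m K J"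
            let ?LK = "\<lambda>p' \<omega>' m. Lw b y p' \<omega>' m K"
            let ?LJ = "\<lambda>p' \<omega>' m. Lw b y p' \<omega>' m J"
            have L1: "Lw b y p \<omega> n (?U q) = \<alpha> * Lw b y (p+1) (pop p \<omega>) m (?U q) + (1-\<alpha>) * Lw b y (p-1) (pop p \<omega>) m (?U q)"
              using Suc pF pb by (simp add: \<alpha>_def)
            have R1: "Uw a y q \<omega> n (?LK p) (?LJ p) = \<beta> * Uw a y (q+1) (pop q \<omega>) m (?LK p) (?LJ p) + (1-\<beta>) * Uw a y (q-1) (pop q \<omega>) m (?LK p) (?LJ p)"
              using Suc qF qa by (simp add: \<beta>_def)
            have IHm: "\<And>p' q' \<omega>'. p' \<le> y+1 \<Longrightarrow> y \<le> q' \<Longrightarrow> Lw b y p' \<omega>' m (?U q') = Uw a y q' \<omega>' m (?LK p') (?LJ p')"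
              using less.IH[of m] Suc by simp
            show ?thesis
            proof (cases m)
              case 0
              have "Lw b y p \<omega> n (?U q) = 0"
                unfolding L1 using IHm[of "p+1" q] IHm[of "p-1" q] py qy qF qa 0 by simp
              moreover have "Uw a y q \<omega> n (?LK p) (?LJ p) = 0"
                unfolding R1 using IHm[of p "q+1"] IHm[of p "q-1"] py qy pF pb 0 by simp
              ultimately show ?thesis by simp
            next
              case (Suc k)
              have IHk: "\<And>p' q' \<omega>'. p' \<le> y+1 \<Longrightarrow> y \<le> q' \<Longrightarrow> Lw b y p' \<omega>' k (?U q') = Uw a y q' \<omega>' k (?LK p') (?LJ p')"
                using less.IH[of k] Suc \<open>n = Suc m\<close> by simp
              have A: "Lw b y p' (pop p \<omega>) m (?U q) = \<beta> * Uw a y (q+1) (pop q (pop p \<omega>)) k (?LK p') (?LJ p') + (1-\<beta>) * Uw a y (q-1) (pop q (pop p \<omega>)) k (?LK p') (?LJ p')"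
                if "p' \<le> y+1" for p'
                using IHm[OF that, of q "pop p \<omega>"] qy qF qa Suc pq
                by (simp add: \<beta>_def pop_other)
              have B: "Uw a y q' (pop q \<omega>) m (?LK p) (?LJ p) = \<alpha> * Lw b y (p+1) (pop p (pop q \<omega>)) k (?U q') + (1-\<alpha>) * Lw b y (p-1) (pop p (pop q \<omega>)) k (?U q')"
                if "y \<le> q'" for q'
                using IHm[OF _ that, of p "pop q \<omega>"] py pF pb Suc pq
                by (simp add: \<alpha>_def pop_other)
              define \<omega>2 where "\<omega>2 = pop q (pop p \<omega>)"
              have w2: "pop p (pop q \<omega>) = \<omega>2" by (simp add: \<omega>2_def pop_comm)
              define X where "X = (\<lambda>p' q'. Uw a y q' \<omega>2 k (?LK p') (?LJ p'))"
              have A1: "Lw b y (p+1) (pop p \<omega>) m (?U q) = \<beta> * X (p+1) (q+1) + (1-\<beta>) * X (p+1) (q-1)"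
                using A[of "p+1"] py by (simp add: X_def \<omega>2_def)
              have A2: "Lw b y (p-1) (pop p \<omega>) m (?U q) = \<beta> * X (p-1) (q+1) + (1-\<beta>) * X (p-1) (q-1)"
                using A[of "p-1"] py by (simp add: X_def \<omega>2_def)
              have B1: "Uw a y (q+1) (pop q \<omega>) m (?LK p) (?LJ p) = \<alpha> * X (p+1) (q+1) + (1-\<alpha>) * X (p-1) (q+1)"
                using B[of "q+1"] qy IHk[of "p+1" "q+1" \<omega>2] IHk[of "p-1" "q+1" \<omega>2] py
                by (simp add: X_def w2)
              have B2: "Uw a y (q-1) (pop q \<omega>) m (?LK p) (?LJ p) = \<alpha> * X (p+1) (q-1) + (1-\<alpha>) * X (p-1) (q-1)"
                using B[of "q-1"] qy IHk[of "p+1" "q-1" \<omega>2] IHk[of "p-1" "q-1" \<omega>2] py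
                by (simp add: X_def w2)
              show ?thesis
                unfolding L1 R1 A1 A2 B1 B2 by (simp add: algebra_simps)
            qed
          qed
        qed
      qed
    qed
  qed
qed

lemma cvx_mono:
  fixes \<alpha> A B A' B' :: real
  assumes "0 \<le> \<alpha>" "\<alpha> \<le> 1" "A \<le> A'" "B \<le> B'"
  shows "\<alpha> * A + (1-\<alpha>) * B \<le> \<alpha> * A' + (1-\<alpha>) * B'"
  using assms by (intro add_mono mult_left_mono) auto

lemma Lw_le1: "okenv \<omega> \<Longrightarrow> Lw b y p \<omega> n (\<lambda>_ _. 1) \<le> 1"
proof (induction n arbitrary: p \<omega>)
  case (Suc n)
  have "\<omega> p 1 * Lw b y (p+1) (pop p \<omega>) n (\<lambda>_ _. 1) + (1 - \<omega> p 1) * Lw b y (p-1) (pop p \<omega>) n (\<lambda>_ _. 1)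
     \<le> \<omega> p 1 * 1 + (1 - \<omega> p 1) * 1"
    using Suc okenv_D[OF Suc.prems] okenv_pop by (intro cvx_mono) auto
  then show ?case by simp
qed simp

lemma Lw_mono:
  "okenv \<omega> \<Longrightarrow> p \<le> y \<Longrightarrow> (\<And>\<omega>' m. okenv \<omega>' \<Longrightarrow> m < n \<Longrightarrow> K \<omega>' m \<le> K' \<omega>' m)
   \<Longrightarrow> Lw b y p \<omega> n K \<le> Lw b y p \<omega> n K'"
proof (induction n arbitrary: p \<omega>)
  case (Suc n)
  have o: "okenv (pop p \<omega>)" using okenv_pop Suc.prems by blast
  have 1: "Lw b y (p+1) (pop p \<omega>) n K \<le> Lw b y (p+1) (pop p \<omega>) n K'"
  proof (cases "p+1 = y+1")
    case True
    then show ?thesis using Suc.prems(3)[OF o] by simp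
  next
    case False
    then show ?thesis using Suc.IH[OF o] Suc.prems by simp
  qed
  have 2: "Lw b y (p-1) (pop p \<omega>) n K \<le> Lw b y (p-1) (pop p \<omega>) n K'"
    using Suc.IH[OF o] Suc.prems by simp
  show ?case using Suc.prems okenv_D[OF Suc.prems(1)] 1 2 by (simp add: cvx_mono)
qed simp

lemma Uw_mono:
  "okenv \<omega> \<Longrightarrow> y+1 \<le> q \<Longrightarrow> (\<And>\<omega>' m. okenv \<omega>' \<Longrightarrow> m < n \<Longrightarrow> K \<omega>' m \<le> K' \<omega>' m)
   \<Longrightarrow> (\<And>\<omega>' m. okenv \<omega>' \<Longrightarrow> m \<le> n \<Longrightarrow> J \<omega>' m \<le> J' \<omega>' m)
   \<Longrightarrow> Uw a y q \<omega> n K J \<le> Uw a y q \<omega> n K' J'"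
proof (induction n arbitrary: q \<omega>)
  case 0
  then show ?case by auto
next
  case (Suc n)
  have o: "okenv (pop q \<omega>)" using okenv_pop Suc.prems by blast
  have 1: "Uw a y (q+1) (pop q \<omega>) n K J \<le> Uw a y (q+1) (pop q \<omega>) n K' J'"
    using Suc.IH[OF o] Suc.prems by simp
  have 2: "Uw a y (q-1) (pop q \<omega>) n K J \<le> Uw a y (q-1) (pop q \<omega>) n K' J'"
  proof (cases "q-1 = y")
    case True
    then show ?thesis using Suc.prems(3)[OF o] by simp
  next
    case False
    then show ?thesis using Suc.IH[OF o] Suc.prems by simp
  qed
  show ?case using Suc.prems okenv_D[OF Suc.prems(1)] 1 2 by (simp add: cvx_mono)
qed


lemma fr_up:
  assumes b: "b \<le> ereal (real_of_int y)" and a: "ereal (real_of_int (y+1)) \<le> a"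
  shows "okenv \<omega> \<Longrightarrow> fr a b y \<omega> n \<le> fr a b (y+1) \<omega> n"
proof (induction n arbitrary: \<omega> rule: less_induct)
  case (less n)
  let ?F0 = "\<lambda>\<omega>' m. fr a b y \<omega>' m"
  let ?F1 = "\<lambda>\<omega>' m. fr a b (y+1) \<omega>' m"
  let ?One = "\<lambda>(_::env) (_::nat). 1::real"
  have e1: "?F1 = (\<lambda>\<omega>' m. Uw a y (y+1) \<omega>' m ?F0 ?One)"
    by (intro ext fr_Uw[OF b]) simp
  have "fr a b y \<omega> n = Lw b y y \<omega> n ?F1"
    by (rule fr_Lw[OF a]) simp
  also have "\<dots> = Lw b y y \<omega> n (\<lambda>\<omega>' m. Uw a y (y+1) \<omega>' m ?F0 ?One)"
    by (simp only: e1)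
  also have "\<dots> = Uw a y (y+1) \<omega> n (\<lambda>\<omega>' m. Lw b y y \<omega>' m ?F0) (\<lambda>\<omega>' m. Lw b y y \<omega>' m ?One)"
    by (rule Lw_Uw_comm[OF b]) simp_all
  also have "\<dots> \<le> Uw a y (y+1) \<omega> n ?F0 ?One"
  proof (rule Uw_mono[OF less.prems])
    fix \<omega>' m assume o: "okenv \<omega>'" and m: "m < n"
    have "Lw b y y \<omega>' m ?F0 \<le> Lw b y y \<omega>' m ?F1"
      using less.IH m by (intro Lw_mono[OF o]) auto
    also have "\<dots> = fr a b y \<omega>' m" by (rule fr_Lw[OF a, symmetric]) simp
    finally show "Lw b y y \<omega>' m ?F0 \<le> ?F0 \<omega>' m" .
  next
    fix \<omega>' m assume o: "okenv \<omega>'"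
    show "Lw b y y \<omega>' m ?One \<le> ?One \<omega>' m" using Lw_le1[OF o] by simp
  qed simp
  also have "\<dots> = fr a b (y+1) \<omega> n" by (rule fr_Uw[OF b, symmetric]) simp
  finally show ?case .
qed

definition refl_env :: "env \<Rightarrow> env" where
  "refl_env \<omega> = (\<lambda>z i. 1 - \<omega> (-z) i)"

lemma okenv_refl: "okenv \<omega> \<Longrightarrow> okenv (refl_env \<omega>)"
  by (auto simp: okenv_def refl_env_def)

lemma pop_refl: "pop (-p) (refl_env \<omega>) = refl_env (pop p \<omega>)"
  by (auto simp: pop_def refl_env_def fun_eq_iff)

lemma ereal_neg_eq: "(ereal (real_of_int (-p)) = - a) = (ereal (real_of_int p) = a)"
  by (cases a) auto

lemma fr_refl: "fr a b p \<omega> n = fr (-a) (-b) (-p) (refl_env \<omega>) n"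
proof (induction n arbitrary: p \<omega>)
  case 0
  then show ?case by (simp only: fr.simps ereal_neg_eq)
next
  case (Suc n)
  have i1: "fr a b (p+1) (pop p \<omega>) n = fr (-a) (-b) (-p - 1) (pop (-p) (refl_env \<omega>)) n"
    using Suc.IH[of "p+1" "pop p \<omega>"] by (simp add: pop_refl)
  have i2: "fr a b (p-1) (pop p \<omega>) n = fr (-a) (-b) (-p + 1) (pop (-p) (refl_env \<omega>)) n"
    using Suc.IH[of "p-1" "pop p \<omega>"] by (simp add: pop_refl)
  have r: "refl_env \<omega> (-p) 1 = 1 - \<omega> p 1" by (simp add: refl_env_def)
  show ?case
    unfolding fr.simps ereal_neg_eq i1 i2 r by (simp add: algebra_simps)
qed

lemma fr_down:
  assumes a: "a \<le> ereal (real_of_int y)" and b: "ereal (real_of_int (y+1)) \<le> b" and o: "okenv \<omega>"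
  shows "fr a b (y+1) \<omega> n \<le> fr a b y \<omega> n"
proof -
  have b': "- b \<le> ereal (real_of_int (-(y+1)))" using b
    by (metis ereal_minus_le_minus ereal_uminus_uminus of_int_minus uminus_ereal.simps(1))
  have a': "ereal (real_of_int (-(y+1) + 1)) \<le> - a" using a
    by (metis add.commute diff_add_cancel ereal_minus_le_minus minus_add_distrib minus_diff_eq of_int_minus uminus_ereal.simps(1) uminus_add_conv_diff)
  have "fr a b (y+1) \<omega> n = fr (-a) (-b) (-(y+1)) (refl_env \<omega>) n" by (rule fr_refl)
  also have "\<dots> \<le> fr (-a) (-b) (-(y+1) + 1) (refl_env \<omega>) n"
    by (rule fr_up[OF b' a' okenv_refl[OF o]])
  also have "\<dots> = fr a b y \<omega> n" using fr_refl[of a b y \<omega> n] by simp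
  finally show ?thesis .
qed

lemma fr_up_gen:
  assumes b: "b \<le> ereal (real_of_int y1)" and o: "okenv \<omega>"
  shows "ereal (real_of_int (y1 + int k)) \<le> a \<Longrightarrow> fr a b y1 \<omega> n \<le> fr a b (y1 + int k) \<omega> n"
proof (induction k)
  case 0
  then show ?case by simp
next
  case (Suc k)
  have h: "ereal (real_of_int (y1 + int k)) \<le> a"
    using Suc.prems by (rule order_trans[rotated]) simp
  have "fr a b (y1 + int k) \<omega> n \<le> fr a b (y1 + int k + 1) \<omega> n"
  proof (rule fr_up[OF _ _ o])
    show "b \<le> ereal (real_of_int (y1 + int k))" using b by (rule order_trans) simp
    have eq: "y1 + int k + 1 = y1 + int (Suc k)" by simp
    show "ereal (real_of_int (y1 + int k + 1)) \<le> a" using Suc.prems by (simp only: eq)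
  qed
  moreover have eq: "y1 + int k + 1 = y1 + int (Suc k)" by simp
  ultimately show ?case using Suc.IH[OF h] unfolding eq by linarith
qed

lemma fr_down_gen:
  assumes a: "a \<le> ereal (real_of_int y1)" and o: "okenv \<omega>"
  shows "ereal (real_of_int (y1 + int k)) \<le> b \<Longrightarrow> fr a b (y1 + int k) \<omega> n \<le> fr a b y1 \<omega> n"
proof (induction k)
  case 0
  then show ?case by simp
next
  case (Suc k)
  have h: "ereal (real_of_int (y1 + int k)) \<le> b"
    using Suc.prems by (rule order_trans[rotated]) simp
  have "fr a b (y1 + int k + 1) \<omega> n \<le> fr a b (y1 + int k) \<omega> n"
  proof (rule fr_down[OF _ _ o])
    show "a \<le> ereal (real_of_int (y1 + int k))" using a by (rule order_trans) simp
    have eq: "y1 + int k + 1 = y1 + int (Suc k)" by simp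
    show "ereal (real_of_int (y1 + int k + 1)) \<le> b" using Suc.prems by (simp only: eq)
  qed
  moreover have eq: "y1 + int k + 1 = y1 + int (Suc k)" by simp
  ultimately show ?case using Suc.IH[OF h] unfolding eq by linarith
qed



abbreviation UM :: "real measure" where "UM \<equiv> uniform_measure lborel {0..1::real}"

lemma UM_prob: "prob_space UM"
  by (rule prob_space_uniform_measure) auto

interpretation UMP: prob_space UM by (rule UM_prob)
interpretation SEQ: sequence_space UM ..

lemma cs_eq: "cookie_space = SEQ.S"
  by (simp add: cookie_space_def)

lemma cs_prob: "prob_space cookie_space"
  unfolding cs_eq by (rule prob_space_PiM) (rule UM_prob)

interpretation CS: prob_space cookie_space by (rule cs_prob)

lemma space_cs: "space cookie_space = UNIV"
  by (simp add: cs_eq space_PiM)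

lemma UM_less: assumes "0 \<le> c" "c \<le> 1" shows "measure UM {s. s < c} = c"
proof -
  have "measure UM {s. s < c} = measure lborel ({0..1} \<inter> {s. s < c}) / measure lborel {0..1::real}"
    by (subst measure_uniform_measure) auto
  also have "{0..1} \<inter> {s. s < c} = {0..<c}" using assms by auto
  finally show ?thesis using assms by simp
qed

lemma step_measure:
  assumes A: "A \<in> sets cookie_space" and B: "B \<in> sets cookie_space" and c: "0 \<le> c" "c \<le> 1"
  shows "measure cookie_space {u \<in> space cookie_space. (u 0 < c \<and> (u \<circ> Suc) \<in> A) \<or> (\<not> u 0 < c \<and> (u \<circ> Suc) \<in> B)}
     = c * measure cookie_space A + (1 - c) * measure cookie_space B"
proof -
  interpret P: pair_sigma_finite UM SEQ.S ..
  have sfS: "sigma_finite_measure SEQ.S"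
    using cs_prob by (simp add: cs_eq prob_space_imp_sigma_finite)
  interpret PP: prob_space "UM \<Otimes>\<^sub>M SEQ.S" by (rule prob_space_pair) (rule UM_prob, rule SEQ.prob_space_axioms)
  let ?f = "\<lambda>(s, \<omega>). case_nat s \<omega>"
  let ?X = "{u \<in> space cookie_space. (u 0 < c \<and> (u \<circ> Suc) \<in> A) \<or> (\<not> u 0 < c \<and> (u \<circ> Suc) \<in> B)}"
  have AS: "A \<in> sets SEQ.S" and BS: "B \<in> sets SEQ.S" using A B by (simp_all add: cs_eq)
  have fm: "?f \<in> measurable (UM \<Otimes>\<^sub>M SEQ.S) SEQ.S" by measurable
  have sm: "(\<lambda>u::nat\<Rightarrow>real. u \<circ> Suc) \<in> measurable SEQ.S SEQ.S"
    by (rule measurable_PiM_single') (auto simp: space_PiM)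
  have Xs: "?X \<in> sets SEQ.S"
  proof -
    have sp: "space SEQ.S = UNIV" by (simp add: space_PiM)
    have "?X = ({u \<in> space SEQ.S. u 0 < c} \<inter> ((\<lambda>u. u \<circ> Suc) -` A \<inter> space SEQ.S)) \<union> ({u \<in> space SEQ.S. \<not> u 0 < c} \<inter> ((\<lambda>u. u \<circ> Suc) -` B \<inter> space SEQ.S))"
      by (auto simp: cs_eq)
    also have "\<dots> \<in> sets SEQ.S"
    proof -
      have m1: "{u \<in> space SEQ.S. u 0 < c} \<in> sets SEQ.S" by measurable
      have m2: "{u \<in> space SEQ.S. \<not> u 0 < c} \<in> sets SEQ.S" by measurable
      show ?thesis by (intro sets.Un sets.Int m1 m2 measurable_sets[OF sm AS] measurable_sets[OF sm BS])
    qed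
    finally show ?thesis .
  qed
  have "measure cookie_space ?X = measure (distr (UM \<Otimes>\<^sub>M SEQ.S) SEQ.S ?f) ?X"
    by (simp add: SEQ.PiM_iter cs_eq)
  also have "\<dots> = measure (UM \<Otimes>\<^sub>M SEQ.S) (?f -` ?X \<inter> space (UM \<Otimes>\<^sub>M SEQ.S))"
    by (rule measure_distr[OF fm Xs])
  also have "?f -` ?X \<inter> space (UM \<Otimes>\<^sub>M SEQ.S) = ({s. s < c} \<times> A) \<union> ({s. \<not> s < c} \<times> B)"
    using sets.sets_into_space[OF AS] sets.sets_into_space[OF BS]
    by (auto simp: space_pair_measure space_PiM space_cs o_def)
  also have "measure (UM \<Otimes>\<^sub>M SEQ.S) (({s. s < c} \<times> A) \<union> ({s. \<not> s < c} \<times> B))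
     = measure (UM \<Otimes>\<^sub>M SEQ.S) ({s. s < c} \<times> A) + measure (UM \<Otimes>\<^sub>M SEQ.S) ({s. \<not> s < c} \<times> B)"
    using AS BS by (intro PP.finite_measure_Union) auto
  also have "measure (UM \<Otimes>\<^sub>M SEQ.S) ({s. s < c} \<times> A) = measure UM {s. s < c} * measure SEQ.S A"
  proof -
    have ss: "{s::real. s < c} \<in> sets UM" by simp
    have "emeasure (UM \<Otimes>\<^sub>M SEQ.S) ({s. s < c} \<times> A) = emeasure UM {s. s < c} * emeasure SEQ.S A"
      by (rule sigma_finite_measure.emeasure_pair_measure_Times[OF sfS ss AS])
    then show ?thesis by (simp only: measure_def enn2real_mult)
  qed
  also have "measure (UM \<Otimes>\<^sub>M SEQ.S) ({s. \<not> s < c} \<times> B) = measure UM {s. \<not> s < c} * measure SEQ.S B"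
  proof -
    have ss: "{s::real. \<not> s < c} \<in> sets UM" by simp
    have "emeasure (UM \<Otimes>\<^sub>M SEQ.S) ({s. \<not> s < c} \<times> B) = emeasure UM {s. \<not> s < c} * emeasure SEQ.S B"
      by (rule sigma_finite_measure.emeasure_pair_measure_Times[OF sfS ss BS])
    then show ?thesis by (simp only: measure_def enn2real_mult)
  qed
  also have "measure UM {s. \<not> s < c} = 1 - c"
  proof -
    have "measure UM {s. \<not> s < c} = measure UM (space UM - {s. s < c})"
      by (simp add: set_diff_eq)
    also have "\<dots> = 1 - measure UM {s. s < c}" by (rule UMP.prob_compl) simp
    finally show ?thesis using UM_less[OF c] by simp
  qed
  finally show ?thesis using UM_less[OF c] by (simp add: cs_eq o_def)
qed

lemma hist_ne: "cookie_hist y \<omega> u n \<noteq> []"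
  by (cases n) (auto simp: Let_def)

lemma hist_shift:
  "cookie_hist y \<omega> u (Suc n) = y # cookie_hist (if u 0 < \<omega> y 1 then y+1 else y-1) (pop y \<omega>) (u \<circ> Suc) n"
proof (induction n)
  case 0
  then show ?case by simp
next
  case (Suc n)
  define ys where "ys = cookie_hist (if u 0 < \<omega> y 1 then y+1 else y-1) (pop y \<omega>) (u \<circ> Suc) n"
  have ne: "ys \<noteq> []" unfolding ys_def by (rule hist_ne)
  have l: "last (y # ys) = last ys" using ne by simp
  have c: "\<omega> (last ys) (count_list (y # ys) (last ys)) = pop y \<omega> (last ys) (count_list ys (last ys))"
    by (simp add: pop_def)
  have h1: "cookie_hist y \<omega> u (Suc n) = y # ys" using Suc.IH unfolding ys_def by (simp add: o_def)
  have h2: "cookie_hist (if u 0 < \<omega> y 1 then y+1 else y-1) (pop y \<omega>) (u \<circ> Suc) (Suc n)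
      = ys @ [if u (Suc n) < pop y \<omega> (last ys) (count_list ys (last ys)) then last ys + 1 else last ys - 1]"
    by (simp only: cookie_hist.simps(2) Let_def ys_def[symmetric]) simp
  show ?case
    unfolding cookie_hist.simps(2)[of y \<omega> u "Suc n"] Let_def h1 h2 l c by simp
qed


lemma hist_meas: "(\<lambda>u. cookie_hist y \<omega> u n) \<in> measurable cookie_space (count_space UNIV)"
proof (induction n)
  case 0
  then show ?case by simp
next
  case (Suc n)
  let ?g = "\<lambda>(xs::int list) (u::nat\<Rightarrow>real). xs @ [if u n < \<omega> (last xs) (count_list xs (last xs)) then last xs + 1 else last xs - 1]"
  have "(\<lambda>u. ?g (cookie_hist y \<omega> u n) u) \<in> measurable cookie_space (count_space UNIV)"
  proof (rule measurable_compose_countable[OF _ Suc.IH])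
    fix xs :: "int list"
    have p: "{u \<in> space cookie_space. u n < \<omega> (last xs) (count_list xs (last xs))} \<in> sets cookie_space"
    proof -
      have cm: "(\<lambda>u::nat\<Rightarrow>real. u n) \<in> measurable cookie_space UM"
        unfolding cs_eq by (rule measurable_component_singleton) simp
      have "(\<lambda>u::nat\<Rightarrow>real. u n) -` {..<\<omega> (last xs) (count_list xs (last xs))} \<inter> space cookie_space \<in> sets cookie_space"
        by (rule measurable_sets[OF cm]) simp
      moreover have "(\<lambda>u::nat\<Rightarrow>real. u n) -` {..<\<omega> (last xs) (count_list xs (last xs))} \<inter> space cookie_space
         = {u \<in> space cookie_space. u n < \<omega> (last xs) (count_list xs (last xs))}" by auto
      ultimately show ?thesis by simp
    qed
    show "(\<lambda>u. ?g xs u) \<in> measurable cookie_space (count_space UNIV)"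
    proof -
      have "(\<lambda>u. if u n < \<omega> (last xs) (count_list xs (last xs)) then xs @ [last xs + 1] else xs @ [last xs - 1]) \<in> measurable cookie_space (count_space UNIV)"
        by (rule measurable_If[OF measurable_const measurable_const p]) auto
      then show ?thesis by (simp add: if_distrib[of "\<lambda>t. xs @ [t]"])
    qed
  qed
  then show ?case by (simp only: cookie_hist.simps(2) Let_def)
qed

definition Pr :: "int \<Rightarrow> env \<Rightarrow> nat \<Rightarrow> (int list \<Rightarrow> bool) \<Rightarrow> real" where
  "Pr y \<omega> n Q = measure cookie_space {u \<in> space cookie_space. Q (cookie_hist y \<omega> u n)}"

lemma Pr_sets: "{u \<in> space cookie_space. Q (cookie_hist y \<omega> u n)} \<in> sets cookie_space"
proof -
  have "(\<lambda>u. cookie_hist y \<omega> u n) -` {l. Q l} \<inter> space cookie_space \<in> sets cookie_space"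
    by (rule measurable_sets[OF hist_meas]) simp
  moreover have "(\<lambda>u. cookie_hist y \<omega> u n) -` {l. Q l} \<inter> space cookie_space = {u \<in> space cookie_space. Q (cookie_hist y \<omega> u n)}"
    by auto
  ultimately show ?thesis by simp
qed

lemma Pr_Suc:
  assumes "0 \<le> \<omega> y 1" "\<omega> y 1 \<le> 1"
  shows "Pr y \<omega> (Suc n) Q = \<omega> y 1 * Pr (y+1) (pop y \<omega>) n (\<lambda>l. Q (y#l)) + (1 - \<omega> y 1) * Pr (y-1) (pop y \<omega>) n (\<lambda>l. Q (y#l))"
proof -
  let ?A = "{v \<in> space cookie_space. Q (y # cookie_hist (y+1) (pop y \<omega>) v n)}"
  let ?B = "{v \<in> space cookie_space. Q (y # cookie_hist (y-1) (pop y \<omega>) v n)}"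
  have "{u \<in> space cookie_space. Q (cookie_hist y \<omega> u (Suc n))}
     = {u \<in> space cookie_space. (u 0 < \<omega> y 1 \<and> (u \<circ> Suc) \<in> ?A) \<or> (\<not> u 0 < \<omega> y 1 \<and> (u \<circ> Suc) \<in> ?B)}"
    by (auto simp: hist_shift space_cs simp del: cookie_hist.simps(2))
  then have "Pr y \<omega> (Suc n) Q = \<omega> y 1 * measure cookie_space ?A + (1 - \<omega> y 1) * measure cookie_space ?B"
    unfolding Pr_def using step_measure[OF Pr_sets Pr_sets assms] by simp
  then show ?thesis by (simp add: Pr_def)
qed

fun sc :: "ereal \<Rightarrow> ereal \<Rightarrow> int list \<Rightarrow> bool" where
  "sc a b [] = False"
| "sc a b (p # l) = (ereal (real_of_int p) = a \<or> (ereal (real_of_int p) \<noteq> b \<and> sc a b l))"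

lemma Pr_const: "Pr y \<omega> n (\<lambda>_. P) = (if P then 1 else 0)"
  by (simp add: Pr_def space_cs CS.prob_space[unfolded space_cs])

lemma Pr_fr: "okenv \<omega> \<Longrightarrow> Pr y \<omega> n (sc a b) = fr a b y \<omega> n"
proof (induction n arbitrary: y \<omega>)
  case 0
  then show ?case by (simp add: Pr_def space_cs CS.prob_space[unfolded space_cs])
next
  case (Suc n)
  have o: "okenv (pop y \<omega>)" using okenv_pop Suc.prems by blast
  have r: "Pr y \<omega> (Suc n) (sc a b) = \<omega> y 1 * Pr (y+1) (pop y \<omega>) n (\<lambda>l. sc a b (y#l)) + (1 - \<omega> y 1) * Pr (y-1) (pop y \<omega>) n (\<lambda>l. sc a b (y#l))"
    using okenv_D[OF Suc.prems] by (intro Pr_Suc) auto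
  show ?case
  proof (cases "ereal (real_of_int y) = a")
    case True
    then show ?thesis unfolding r by (simp add: Pr_const algebra_simps)
  next
    case F1: False
    show ?thesis
    proof (cases "ereal (real_of_int y) = b")
      case True
      then show ?thesis unfolding r using F1 by (simp add: Pr_const)
    next
      case False
      then show ?thesis unfolding r using F1 Suc.IH[OF o] by simp
    qed
  qed
qed



lemma hist_len: "length (cookie_hist y \<omega> u n) = Suc n"
  by (induction n) (auto simp: Let_def)

lemma hist_nth: "k \<le> n \<Longrightarrow> cookie_hist y \<omega> u n ! k = cookie_walk y \<omega> u k"
proof (induction n)
  case 0
  then show ?case by (simp add: cookie_walk_def)
next
  case (Suc n)
  show ?case
  proof (cases "k \<le> n")
    case True
    then show ?thesis using Suc hist_len[of y \<omega> u n]
      by (simp add: Let_def nth_append del: cookie_hist.simps(1))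
  next
    case False
    then have "k = Suc n" using Suc.prems by simp
    then show ?thesis using hist_len[of y \<omega> u n]
      by (simp add: Let_def nth_append cookie_walk_def del: cookie_hist.simps(1))
  qed
qed

lemma sc_iff: "sc a b l = (\<exists>k<length l. ereal (real_of_int (l!k)) = a \<and> (\<forall>j<k. ereal (real_of_int (l!j)) \<noteq> b))"
proof (induction l)
  case Nil
  then show ?case by simp
next
  case (Cons p l)
  show ?case
  proof
    assume "sc a b (p # l)"
    then show "\<exists>k<length (p # l). ereal (real_of_int ((p # l) ! k)) = a \<and> (\<forall>j<k. ereal (real_of_int ((p # l) ! j)) \<noteq> b)"
    proof (cases "ereal (real_of_int p) = a")
      case True
      then show ?thesis by (intro exI[of _ 0]) simp
    next
      case False
      with \<open>sc a b (p # l)\<close> have "ereal (real_of_int p) \<noteq> b" "sc a b l" by auto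
      with Cons.IH obtain k where "k < length l" "ereal (real_of_int (l!k)) = a" "\<forall>j<k. ereal (real_of_int (l!j)) \<noteq> b" by auto
      then show ?thesis using \<open>ereal (real_of_int p) \<noteq> b\<close>
        by (intro exI[of _ "Suc k"]) (auto simp: less_Suc_eq_0_disj)
    qed
  next
    assume "\<exists>k<length (p # l). ereal (real_of_int ((p # l) ! k)) = a \<and> (\<forall>j<k. ereal (real_of_int ((p # l) ! j)) \<noteq> b)"
    then obtain k where k: "k < length (p # l)" "ereal (real_of_int ((p # l) ! k)) = a" "\<forall>j<k. ereal (real_of_int ((p # l) ! j)) \<noteq> b" by blast
    show "sc a b (p # l)"
    proof (cases k)
      case 0
      then show ?thesis using k by simp
    next
      case (Suc k')
      then have "ereal (real_of_int p) \<noteq> b" using k(3)[rule_format, of 0] by simp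
      moreover have "sc a b l" using Cons.IH k Suc by (auto intro!: exI[of _ k'])
      ultimately show ?thesis by simp
    qed
  qed
qed

lemma sc_hist: "sc a b (cookie_hist y \<omega> u n) =
   (\<exists>k\<le>n. ereal (real_of_int (cookie_walk y \<omega> u k)) = a \<and> (\<forall>j<k. ereal (real_of_int (cookie_walk y \<omega> u j)) \<noteq> b))"
proof -
  let ?h = "cookie_hist y \<omega> u n" and ?X = "cookie_walk y \<omega> u"
  have e: "\<And>k. k \<le> n \<Longrightarrow> ?h ! k = ?X k" by (rule hist_nth)
  have "(\<exists>k<Suc n. ereal (real_of_int (?h!k)) = a \<and> (\<forall>j<k. ereal (real_of_int (?h!j)) \<noteq> b))
     = (\<exists>k\<le>n. ereal (real_of_int (?X k)) = a \<and> (\<forall>j<k. ereal (real_of_int (?X j)) \<noteq> b))"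
  proof (intro ex_cong1)
    fix k
    show "(k<Suc n \<and> ereal (real_of_int (?h!k)) = a \<and> (\<forall>j<k. ereal (real_of_int (?h!j)) \<noteq> b))
     = (k\<le>n \<and> ereal (real_of_int (?X k)) = a \<and> (\<forall>j<k. ereal (real_of_int (?X j)) \<noteq> b))"
    proof (cases "k \<le> n")
      case True
      then have "\<forall>j<k. ?h!j = ?X j" using e by auto
      then show ?thesis using True e by auto
    qed simp
  qed
  then show ?thesis unfolding sc_iff hist_len by simp
qed

lemma hit_cases: "hit X a = \<infinity> \<or> hit X a = ereal (real (LEAST n. ereal (of_int (X n)) = a)) \<and> (\<exists>n. ereal (of_int (X n)) = a)"
  by (auto simp: hit_def)

lemma hit_iff: "(hit X a \<le> min (hit X b) (ereal (real n))) =
   (\<exists>k\<le>n. ereal (real_of_int (X k)) = a \<and> (\<forall>j<k. ereal (real_of_int (X j)) \<noteq> b))"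
proof
  assume h: "hit X a \<le> min (hit X b) (ereal (real n))"
  have ex: "\<exists>m. ereal (of_int (X m)) = a"
  proof (rule ccontr)
    assume "\<not> ?thesis" then have "hit X a = \<infinity>" by (simp add: hit_def)
    with h show False by simp
  qed
  define K where "K = (LEAST m. ereal (of_int (X m)) = a)"
  have hK: "hit X a = ereal (real K)" using ex by (simp add: hit_def K_def)
  have XK: "ereal (of_int (X K)) = a" unfolding K_def using ex by (rule LeastI_ex)
  have Kn: "K \<le> n" using h hK by simp
  have "\<forall>j<K. ereal (real_of_int (X j)) \<noteq> b"
  proof (intro allI impI notI)
    fix j assume j: "j < K" and Xj: "ereal (real_of_int (X j)) = b"
    then have "hit X b = ereal (real (LEAST m. ereal (of_int (X m)) = b))" by (auto simp: hit_def)
    also have "(LEAST m. ereal (of_int (X m)) = b) \<le> j" using Xj by (intro Least_le) simp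
    then have "ereal (real (LEAST m. ereal (of_int (X m)) = b)) < ereal (real K)" using j by simp
    finally have "hit X b < hit X a" using hK by simp
    with h show False by (simp add: not_le[symmetric])
  qed
  then show "\<exists>k\<le>n. ereal (real_of_int (X k)) = a \<and> (\<forall>j<k. ereal (real_of_int (X j)) \<noteq> b)"
    using Kn XK by auto
next
  assume "\<exists>k\<le>n. ereal (real_of_int (X k)) = a \<and> (\<forall>j<k. ereal (real_of_int (X j)) \<noteq> b)"
  then obtain k where k: "k \<le> n" "ereal (real_of_int (X k)) = a" "\<forall>j<k. ereal (real_of_int (X j)) \<noteq> b" by blast
  define K where "K = (LEAST m. ereal (of_int (X m)) = a)"
  have hK: "hit X a = ereal (real K)" using k by (auto simp: hit_def K_def)
  have Kk: "K \<le> k" unfolding K_def using k by (intro Least_le) simp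
  have "hit X a \<le> hit X b"
  proof (cases "\<exists>m. ereal (of_int (X m)) = b")
    case True
    define L where "L = (LEAST m. ereal (of_int (X m)) = b)"
    have hL: "hit X b = ereal (real L)" using True by (simp add: hit_def L_def)
    have "ereal (of_int (X L)) = b" unfolding L_def using True by (rule LeastI_ex)
    then have "\<not> L < k" using k(3) by auto
    then show ?thesis using hK hL Kk by simp
  next
    case False
    then show ?thesis by (simp add: hit_def)
  qed
  moreover have "hit X a \<le> ereal (real n)" using hK Kk k(1) by simp
  ultimately show "hit X a \<le> min (hit X b) (ereal (real n))" by simp
qed



lemma okenv_Omega: assumes "\<omega> \<in> Omega_plus" shows "okenv \<omega>"
  unfolding okenv_def
proof (intro allI impI)
  fix z i assume "(1::nat) \<le> i"
  then have "1/2 \<le> \<omega> z i \<and> \<omega> z i \<le> 1" using assms by (simp add: Omega_plus_def)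
  then show "0 \<le> \<omega> z i \<and> \<omega> z i \<le> 1" by linarith
qed

lemma cp_Pr: "(\<And>X. A X = (\<exists>k\<le>n. ereal (real_of_int (X k)) = a \<and> (\<forall>j<k. ereal (real_of_int (X j)) \<noteq> b)))
   \<Longrightarrow> cookie_prob y \<omega> A = Pr y \<omega> n (sc a b)"
  unfolding cookie_prob_def Pr_def sc_hist by simp

lemma hist_sc_mono: "sc a b (cookie_hist y \<omega> u n) \<Longrightarrow> sc a b (cookie_hist y \<omega> u (Suc n))"
  unfolding sc_hist using le_SucI by blast

theorem mainTheorem14:
  fixes \<omega> :: "int \<Rightarrow> nat \<Rightarrow> real" and x z t :: ereal and y1 y2 :: int
  assumes "\<omega> \<in> Omega_plus"
    and "x = -\<infinity> \<or> (\<exists>k::int. x = ereal (of_int k))"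
    and "z = \<infinity> \<or> (\<exists>k::int. z = ereal (of_int k))"
    and "x \<le> ereal (of_int y1)" and "y1 \<le> y2" and "ereal (of_int y2) \<le> z"
    and "0 \<le> t"
  shows "cookie_prob y1 \<omega> (\<lambda>X. hit X z \<le> min (hit X x) t)
           \<le> cookie_prob y2 \<omega> (\<lambda>X. hit X z \<le> min (hit X x) t)"
proof -
  have o: "okenv \<omega>" using assms(1) by (rule okenv_Omega)
  define k where "k = nat (y2 - y1)"
  have y2k: "y2 = y1 + int k" using assms(5) by (simp add: k_def)
  have x1: "x \<le> ereal (real_of_int y1)" using assms(4) by simp
  have z2: "ereal (real_of_int (y1 + int k)) \<le> z" using assms(6) y2k by simp
  let ?E = "\<lambda>X. hit X z \<le> min (hit X x) t"
  show ?thesis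
  proof (cases t)
    case (real r)
    then have r0: "0 \<le> r" using assms(7) by simp
    define N where "N = nat \<lfloor>r\<rfloor>"
    have evt: "?E X = (hit X z \<le> min (hit X x) (ereal (real N)))" for X
    proof -
      have "(hit X z \<le> ereal r) = (hit X z \<le> ereal (real N))"
      proof (cases "hit X z = \<infinity>")
        case False
        then obtain K where "hit X z = ereal (real K)" using hit_cases[of X z] by auto
        moreover have "(real K \<le> r) = (real K \<le> real_of_int \<lfloor>r\<rfloor>)"
        proof -
          have e1: "(real_of_int (int K) \<le> r) = (int K \<le> \<lfloor>r\<rfloor>)" by (rule le_floor_iff[symmetric])
          have e2: "(real_of_int (int K) \<le> real_of_int \<lfloor>r\<rfloor>) = (int K \<le> \<lfloor>r\<rfloor>)" by (rule of_int_le_iff)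
          show ?thesis using e1 e2 by simp
        qed
        ultimately show ?thesis using r0 by (simp add: N_def)
      qed simp
      then show ?thesis using real by simp
    qed
    have "cookie_prob y \<omega> ?E = fr z x y \<omega> N" for y
    proof -
      have "cookie_prob y \<omega> ?E = Pr y \<omega> N (sc z x)"
        by (rule cp_Pr) (simp only: evt hit_iff)
      then show ?thesis using Pr_fr[OF o] by simp
    qed
    then show ?thesis using fr_up_gen[OF x1 o z2] y2k by simp
  next
    case PInf
    show ?thesis
    proof (cases "x = -\<infinity>")
      case True
      have "hit X x = \<infinity>" for X using True by (simp add: hit_def)
      then have "cookie_prob y \<omega> ?E = 1" for y
        using PInf by (simp add: cookie_prob_def CS.prob_space)
      then show ?thesis by simp
    next
      case xF: False
      show ?thesis
      proof (cases "y1 = y2")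
        case True
        then show ?thesis by simp
      next
        case False
        have xz: "x \<noteq> z" using x1 z2 False y2k
        proof -
          have "ereal (real_of_int y1) < ereal (real_of_int y2)" using False assms(5) by simp
          then have "x < z" using x1 assms(6) by (metis le_less_trans less_le_trans of_int_of_nat_eq)
          then show ?thesis by simp
        qed
        define A where "A y n = {u \<in> space cookie_space. sc x z (cookie_hist y \<omega> u n)}" for y n
        have evt: "?E X = (\<not> (\<exists>n. hit X x \<le> min (hit X z) (ereal (real n))))" for X
        proof -
          have "(\<exists>n. hit X x \<le> min (hit X z) (ereal (real n))) = (hit X x < hit X z)"
          proof
            assume "\<exists>n. hit X x \<le> min (hit X z) (ereal (real n))"
            then obtain n where n: "hit X x \<le> min (hit X z) (ereal (real n))" by blast
            then have "hit X x \<noteq> \<infinity>" by auto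
            then have ex: "\<exists>m. ereal (of_int (X m)) = x" and hK: "hit X x = ereal (real (LEAST m. ereal (of_int (X m)) = x))"
              using hit_cases[of X x] by auto
            show "hit X x < hit X z"
            proof (rule ccontr)
              assume "\<not> hit X x < hit X z"
              then have eq: "hit X z = hit X x" using n by simp
              then have "hit X z \<noteq> \<infinity>" using hK by simp
              then have ez: "\<exists>m. ereal (of_int (X m)) = z" and hL: "hit X z = ereal (real (LEAST m. ereal (of_int (X m)) = z))"
                using hit_cases[of X z] by auto
              have "(LEAST m. ereal (of_int (X m)) = z) = (LEAST m. ereal (of_int (X m)) = x)"
                using eq hK hL by simp
              moreover have "ereal (of_int (X (LEAST m. ereal (of_int (X m)) = z))) = z" using ez by (rule LeastI_ex)
              moreover have "ereal (of_int (X (LEAST m. ereal (of_int (X m)) = x))) = x" using ex by (rule LeastI_ex)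
              ultimately show False using xz by simp
            qed
          next
            assume lt: "hit X x < hit X z"
            then have "hit X x \<noteq> \<infinity>" by auto
            then have hK: "hit X x = ereal (real (LEAST m. ereal (of_int (X m)) = x))"
              using hit_cases[of X x] by auto
            show "\<exists>n. hit X x \<le> min (hit X z) (ereal (real n))"
              using lt hK by (intro exI[of _ "LEAST m. ereal (of_int (X m)) = x"]) simp
          qed
          then show ?thesis using PInf by (simp add: not_less)
        qed
        have cpA: "cookie_prob y \<omega> ?E = 1 - measure cookie_space (\<Union>n. A y n)" for y
        proof -
          have "{u \<in> space cookie_space. ?E (cookie_walk y \<omega> u)} = space cookie_space - (\<Union>n. A y n)"
          proof -
            have "?E (cookie_walk y \<omega> u) = (\<not> (\<exists>n. sc x z (cookie_hist y \<omega> u n)))" for u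
              by (simp only: evt hit_iff sc_hist)
            then show ?thesis by (auto simp: A_def)
          qed
          then have "cookie_prob y \<omega> ?E = measure cookie_space (space cookie_space - (\<Union>n. A y n))"
            by (simp add: cookie_prob_def)
          also have "\<dots> = 1 - measure cookie_space (\<Union>n. A y n)"
            by (rule CS.prob_compl) (use Pr_sets in \<open>auto simp: A_def\<close>)
          finally show ?thesis .
        qed
        have lim: "(\<lambda>n. fr x z y \<omega> n) \<longlonglongrightarrow> measure cookie_space (\<Union>n. A y n)" for y
        proof -
          have "(\<lambda>n. measure cookie_space (A y n)) \<longlonglongrightarrow> measure cookie_space (\<Union>n. A y n)"
          proof (rule CS.finite_Lim_measure_incseq)
            show "range (A y) \<subseteq> sets cookie_space" using Pr_sets by (auto simp: A_def)
            show "incseq (A y)" by (rule incseq_SucI) (auto simp: A_def simp del: cookie_hist.simps(2) intro: hist_sc_mono)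
          qed
          moreover have "measure cookie_space (A y n) = fr x z y \<omega> n" for n
            using Pr_fr[OF o, of y n x z] by (simp add: A_def Pr_def)
          ultimately show ?thesis by simp
        qed
        have "measure cookie_space (\<Union>n. A y2 n) \<le> measure cookie_space (\<Union>n. A y1 n)"
        proof (rule LIMSEQ_le[OF lim lim])
          show "\<exists>N. \<forall>n\<ge>N. fr x z y2 \<omega> n \<le> fr x z y1 \<omega> n"
            using fr_down_gen[OF x1 o z2] y2k by simp
        qed
        then show ?thesis using cpA by simp
      qed
    qed
  next
    case MInf
    then show ?thesis using assms(7) by simp
  qed
qed

end
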